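(* For every $n \geq 1$, every $c \in \{1,\ldots,n\}$ and every $p=(p_1,\ldots,p_n) \in (0,1)^n$ with $p_1 + \cdots + p_n \leq 1$, $$\mathbb{E}(T_{c,n}(p)) \geq \mathbb{E}(T_{c,n}(v)) \geq \mathbb{E}(T_{c,n}(u)),$$ where $p_0 = 1 - (p_1 + \cdots + p_n)$, $v = (v_1,\ldots,v_n)$ with $v_i = (1-p_0)/n$, and $u = (1/n,\ldots,1/n)$.
   Context: For a vector $q=(q_1,\ldots,q_n)$ of nonnegative reals with $q_1+\cdots+q_n\le 1$, let $q_0 = 1-(q_1+\cdots+q_n)$; coupons are drawn independently, one at each time $1,2,\ldots$, from $\{0,1,\ldots,n\}$, coupon $i$ with probability $q_i$, and coupon $0$ never belongs to the collection. $T_{c,n}(q)$ is the number of draws needed until $c$ distinct coupons among $\{1,\ldots,n\}$ have first been drawn. *)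

theory Defs
  imports "HOL-Probability.Probability"
begin

definition coupon_dist :: "nat \<Rightarrow> (nat \<Rightarrow> real) \<Rightarrow> nat pmf" where
  "coupon_dist n q = embed_pmf (\<lambda>i. if i = 0 then 1 - (\<Sum>j=1..n. q j)
                                     else if i \<le> n then q i else 0)"

text \<open>Independent draws: the draw at time t (t = 1,2,...) is omega (t - 1).\<close>
definition draws :: "nat \<Rightarrow> (nat \<Rightarrow> real) \<Rightarrow> (nat \<Rightarrow> nat) measure" where
  "draws n q = (\<Pi>\<^sub>M t\<in>(UNIV::nat set). measure_pmf (coupon_dist n q))"

definition T_cn :: "nat \<Rightarrow> nat \<Rightarrow> (nat \<Rightarrow> nat) \<Rightarrow> ennreal" where
  "T_cn c n \<omega> = (if \<exists>t. c \<le> card (\<omega> ` {..<t} \<inter> {1..n})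
                  then of_nat (LEAST t. c \<le> card (\<omega> ` {..<t} \<inter> {1..n}))
                  else \<top>)"

definition ET :: "nat \<Rightarrow> nat \<Rightarrow> (nat \<Rightarrow> real) \<Rightarrow> ennreal" where
  "ET c n q = (\<integral>\<^sup>+ \<omega>. T_cn c n \<omega> \<partial>draws n q)"

end

theory Submission
  imports Defs
begin


definition LL :: "'a set \<Rightarrow> nat \<Rightarrow> 'a list set" where
  "LL A t = {xs. set xs \<subseteq> A \<and> length xs = t}"

lemma LL_finite: "finite A \<Longrightarrow> finite (LL A t)"
  unfolding LL_def by (rule finite_lists_length_eq)

lemma LL_0: "LL A 0 = {[]}" unfolding LL_def by auto

lemma LL_Suc: "LL A (Suc t) = (\<lambda>(k,xs). k#xs) ` (A \<times> LL A t)"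
  unfolding LL_def by (auto simp: length_Suc_conv image_iff)

lemma sum_LL_Suc:
  assumes "finite A"
  shows "(\<Sum>xs\<in>LL A (Suc t). g xs) = (\<Sum>k\<in>A. \<Sum>xs\<in>LL A t. g (k#xs))"
proof -
  have inj: "inj_on (\<lambda>(k,xs). k#xs) (A \<times> LL A t)" by (auto simp: inj_on_def)
  have "(\<Sum>xs\<in>LL A (Suc t). g xs) = (\<Sum>p\<in>A \<times> LL A t. g ((\<lambda>(k,xs). k#xs) p))"
    unfolding LL_Suc by (rule sum.reindex[OF inj, unfolded comp_def])
  also have "\<dots> = (\<Sum>k\<in>A. \<Sum>xs\<in>LL A t. g (k#xs))"
    by (subst sum.cartesian_product) (rule sum.cong, auto)
  finally show ?thesis .
qed

lemma cnt_pos: "(x \<in> set xs) = (0 < count_list xs x)"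
  using count_list_0_iff[of xs x] by auto

definition FF :: "(nat \<Rightarrow> real) \<Rightarrow> nat set \<Rightarrow> nat \<Rightarrow> (nat set \<Rightarrow> real) \<Rightarrow> real" where
  "FF w A t P = (\<Sum>xs\<in>LL A t. prod_list (map w xs) * P (set xs))"

lemma FF_0: "FF w A 0 P = P {}" by (simp add: FF_def LL_0)

lemma FF_Suc: "finite A \<Longrightarrow> FF w A (Suc t) P = (\<Sum>k\<in>A. w k * FF w A t (\<lambda>S. P (insert k S)))"
  unfolding FF_def by (simp add: sum_LL_Suc sum_distrib_left mult.assoc)

lemma FF_cong: "(\<And>k. k \<in> A \<Longrightarrow> w k = w' k) \<Longrightarrow> FF w A t P = FF w' A t P"
  unfolding FF_def LL_def
  by (intro sum.cong refl arg_cong2[where f="(*)"] arg_cong[where f=prod_list] map_cong) auto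

definition HH :: "nat \<Rightarrow> nat \<Rightarrow> real \<Rightarrow> real \<Rightarrow> (nat set \<Rightarrow> real) \<Rightarrow> nat set \<Rightarrow> nat \<Rightarrow> real" where
  "HH i j x y P S m = (if i \<in> S then x^m * P S + y^m * P (insert j (S - {i}))
       + ((x+y)^m - x^m - y^m) * P (insert j S) else P S)"

definition WW :: "nat \<Rightarrow> (nat \<Rightarrow> real) \<Rightarrow> nat list \<Rightarrow> real" where
  "WW i w ys = prod_list (map (\<lambda>y. if y = i then 1 else w y) ys)"

definition GG where
  "GG i j w A t P = (\<Sum>ys\<in>LL (A - {j}) t. WW i w ys * HH i j (w i) (w j) P (set ys) (count_list ys i))"

lemma HH_step:
  assumes "i \<noteq> j" "i \<in> S \<longleftrightarrow> 0 < m"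
  shows "HH i j x y P (insert i S) (Suc m) = x * HH i j x y (\<lambda>T. P (insert i T)) S m + y * HH i j x y (\<lambda>T. P (insert j T)) S m"
proof (cases "i \<in> S")
  case True
  have e1: "insert i (insert j (S - {i})) = insert j S" using True by auto
  have e2: "insert j (insert j (S - {i})) = insert j (S - {i})" by auto
  have e3: "insert i (insert j S) = insert j S" using True by auto
  show ?thesis using True assms
    by (simp add: HH_def e1 e2 e3 insert_absorb insert_commute algebra_simps)
next
  case False
  then have m: "m = 0" using assms by auto
  have e: "insert j (insert i S - {i}) = insert j S" using False assms by auto
  show ?thesis using False m by (simp add: HH_def e algebra_simps)
qed

lemma HH_other:
  assumes "k \<noteq> i" "k \<noteq> j"
  shows "HH i j x y P (insert k S) m = HH i j x y (\<lambda>T. P (insert k T)) S m"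
proof -
  have "insert j (insert k S - {i}) = insert k (insert j (S - {i}))" using assms by auto
  then show ?thesis using assms by (simp add: HH_def insert_commute)
qed

lemma FF_GG:
  assumes A: "finite A" "i \<in> A" "j \<in> A" "i \<noteq> j"
  shows "FF w A t P = GG i j w A t P"
proof (induction t arbitrary: P)
  case 0
  then show ?case by (simp add: FF_0 GG_def LL_0 WW_def HH_def)
next
  case (Suc t)
  have sA: "A = insert i (insert j (A - {i,j}))" using A by auto
  have sAj: "A - {j} = insert i (A - {i,j})" using A by auto
  have fin: "finite (A - {i,j})" using A by auto
  have "FF w A (Suc t) P = (\<Sum>k\<in>A. w k * GG i j w A t (\<lambda>S. P (insert k S)))"
    using A by (simp add: FF_Suc Suc.IH)
  also have "\<dots> = w i * GG i j w A t (\<lambda>S. P (insert i S)) + w j * GG i j w A t (\<lambda>S. P (insert j S))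
      + (\<Sum>k\<in>A-{i,j}. w k * GG i j w A t (\<lambda>S. P (insert k S)))"
    using A by (simp add: sum.remove[of A i] sum.remove[of "A-{i}" j] Diff_insert2[symmetric] algebra_simps)
  also have "\<dots> = GG i j w A (Suc t) P"
  proof -
    have "GG i j w A (Suc t) P = (\<Sum>k\<in>A - {j}. \<Sum>ys\<in>LL (A - {j}) t.
        WW i w (k#ys) * HH i j (w i) (w j) P (insert k (set ys)) (count_list (k#ys) i))"
      unfolding GG_def using A by (simp add: sum_LL_Suc)
    also have "\<dots> = (\<Sum>ys\<in>LL (A - {j}) t. WW i w ys * HH i j (w i) (w j) P (insert i (set ys)) (Suc (count_list ys i)))
       + (\<Sum>k\<in>A-{i,j}. \<Sum>ys\<in>LL (A - {j}) t.
        WW i w (k#ys) * HH i j (w i) (w j) P (insert k (set ys)) (count_list (k#ys) i))"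
      apply (subst sum.remove[of "A-{j}" i]) using A apply auto[2]
      apply (simp add: WW_def)
      apply (rule sum.cong) using A by (auto simp: WW_def)
    also have "(\<Sum>ys\<in>LL (A - {j}) t. WW i w ys * HH i j (w i) (w j) P (insert i (set ys)) (Suc (count_list ys i)))
       = w i * GG i j w A t (\<lambda>S. P (insert i S)) + w j * GG i j w A t (\<lambda>S. P (insert j S))"
      unfolding GG_def sum_distrib_left sum.distrib[symmetric]
      apply (intro sum.cong refl)
      apply (subst HH_step[OF A(4) cnt_pos])
      by (simp add: algebra_simps)
    also have "(\<Sum>k\<in>A-{i,j}. \<Sum>ys\<in>LL (A - {j}) t.
        WW i w (k#ys) * HH i j (w i) (w j) P (insert k (set ys)) (count_list (k#ys) i))
      = (\<Sum>k\<in>A-{i,j}. w k * GG i j w A t (\<lambda>S. P (insert k S)))"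
      unfolding GG_def sum_distrib_left
      apply (intro sum.cong refl)
      apply (subst HH_other) by (auto simp: WW_def)
    finally show ?thesis by simp
  qed
  finally show ?case .
qed



definition wq :: "nat \<Rightarrow> (nat \<Rightarrow> real) \<Rightarrow> nat \<Rightarrow> real" where
  "wq n q k = (if k = 0 then 1 - (\<Sum>j=1..n. q j) else if k \<le> n then q k else 0)"

lemma coupon_dist_wq: "coupon_dist n q = embed_pmf (wq n q)"
  unfolding coupon_dist_def by (rule arg_cong[where f=embed_pmf]) (auto simp: wq_def)

lemma wq_nonneg: "\<forall>i\<in>{1..n}. 0 \<le> q i \<Longrightarrow> (\<Sum>i=1..n. q i) \<le> 1 \<Longrightarrow> 0 \<le> wq n q k"
  by (auto simp: wq_def)

lemma wq_sum: "(\<Sum>x\<in>{0..n}. wq n q x) = 1"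
proof -
  have "{0..n} = insert 0 {1..n}" by auto
  then have "(\<Sum>x\<in>{0..n}. wq n q x) = wq n q 0 + (\<Sum>x\<in>{1..n}. wq n q x)" by simp
  also have "(\<Sum>x\<in>{1..n}. wq n q x) = (\<Sum>x\<in>{1..n}. q x)" by (rule sum.cong) (auto simp: wq_def)
  finally show ?thesis by (simp add: wq_def)
qed

lemma pmf_coupon:
  assumes q: "\<forall>i\<in>{1..n}. 0 \<le> q i" "(\<Sum>i=1..n. q i) \<le> 1"
  shows "pmf (coupon_dist n q) k = wq n q k"
proof -
  have nn: "\<And>x. 0 \<le> wq n q x" using wq_nonneg[OF q] .
  have "(\<integral>\<^sup>+x. ennreal (wq n q x) \<partial>count_space UNIV) = (\<Sum>x\<in>{0..n}. ennreal (wq n q x))"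
    by (rule nn_integral_count_space') (auto simp: wq_def)
  also have "\<dots> = ennreal (\<Sum>x\<in>{0..n}. wq n q x)" using nn by simp
  finally have "(\<integral>\<^sup>+x. ennreal (wq n q x) \<partial>count_space UNIV) = 1" by (simp add: wq_sum)
  then show ?thesis unfolding coupon_dist_wq by (rule pmf_embed_pmf[OF nn])
qed

definition cyl :: "nat list \<Rightarrow> (nat \<Rightarrow> nat) set" where
  "cyl xs = {\<omega>. \<forall>i<length xs. \<omega> i = xs ! i}"

lemma cyl_emb: "cyl xs = prod_emb UNIV (\<lambda>_. measure_pmf D) {..<length xs} (PiE {..<length xs} (\<lambda>i. {xs!i}))"
  by (auto simp: cyl_def prod_emb_iff space_PiM restrict_PiE_iff)

lemma cyl_sets: "cyl xs \<in> sets (PiM UNIV (\<lambda>_. measure_pmf D))"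
  by (subst cyl_emb[where D=D]) (rule sets_PiM_I, auto)

lemma emeasure_cyl:
  "emeasure (PiM UNIV (\<lambda>_. measure_pmf D)) (cyl xs) = ennreal (prod_list (map (pmf D) xs))"
proof -
  have "emeasure (PiM UNIV (\<lambda>_. measure_pmf D)) (cyl xs) = (\<Prod>i\<in>{..<length xs}. emeasure (measure_pmf D) {xs!i})"
    apply (subst cyl_emb[where D=D])
    by (rule emeasure_PiM_emb) (auto simp: prob_space_measure_pmf)
  also have "\<dots> = (\<Prod>i\<in>{..<length xs}. ennreal (pmf D (xs!i)))" by (simp add: emeasure_pmf_single)
  also have "\<dots> = ennreal (\<Prod>i\<in>{..<length xs}. pmf D (xs!i))" by (rule prod_ennreal) simp
  also have "(\<Prod>i\<in>{..<length xs}. pmf D (xs!i)) = prod_list (map (pmf D) xs)"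
    by (simp add: prod.list_conv_set_nth atLeast0LessThan)
  finally show ?thesis .
qed

lemma cyl_image: "\<omega> \<in> cyl xs \<Longrightarrow> \<omega> ` {..<length xs} = set xs"
  by (auto simp: cyl_def set_conv_nth image_iff)

lemma ev_UN: "{\<omega>. Q (\<omega> ` {..<t})} = (\<Union>xs\<in>{xs. length xs = t \<and> Q (set xs)}. cyl xs)"
proof safe
  fix \<omega> assume "Q (\<omega> ` {..<t})"
  moreover have "\<omega> \<in> cyl (map \<omega> [0..<t])" by (simp add: cyl_def)
  moreover have "set (map \<omega> [0..<t]) = \<omega> ` {..<t}" by (simp add: atLeast0LessThan)
  ultimately have "map \<omega> [0..<t] \<in> {xs. length xs = t \<and> Q (set xs)}" "\<omega> \<in> cyl (map \<omega> [0..<t])" by auto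
  then show "\<omega> \<in> (\<Union>xs\<in>{xs. length xs = t \<and> Q (set xs)}. cyl xs)" by blast
next
  fix \<omega> xs assume "\<omega> \<in> cyl xs" "Q (set xs)" "t = length xs"
  then show "Q (\<omega> ` {..<length xs})" using cyl_image by simp
qed

lemma ev_sets: fixes t :: nat and Q :: "nat set \<Rightarrow> bool" shows "{\<omega>. Q (\<omega> ` {..<t})} \<in> sets (PiM UNIV (\<lambda>_. measure_pmf D))"
  unfolding ev_UN[of Q t] by (rule sets.countable_UN'') (auto simp: cyl_sets)

lemma cyl_disj: "length xs = length ys \<Longrightarrow> xs \<noteq> ys \<Longrightarrow> cyl xs \<inter> cyl ys = {}"
proof -
  assume l: "length xs = length ys" "xs \<noteq> ys"
  then obtain i where i: "i < length xs" "xs ! i \<noteq> ys ! i" using nth_equalityI by blast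
  then show ?thesis using l by (auto simp: cyl_def)
qed

lemma AE_range:
  assumes "\<And>k. k \<notin> A \<Longrightarrow> pmf D k = 0"
  shows "AE \<omega> in PiM (UNIV :: nat set) (\<lambda>_. measure_pmf D). \<forall>i. \<omega> i \<in> A"
proof -
  define N where "N i = prod_emb UNIV (\<lambda>_. measure_pmf D) {i} (PiE {i} (\<lambda>_. - A))" for i :: nat
  have "N i \<in> null_sets (PiM UNIV (\<lambda>_. measure_pmf D))" for i
  proof -
    have "emeasure (PiM UNIV (\<lambda>_. measure_pmf D)) (N i) = emeasure (measure_pmf D) (- A)"
      unfolding N_def by (subst emeasure_PiM_emb) (auto simp: prob_space_measure_pmf)
    also have "\<dots> = 0"
      using assms by (subst measure_pmf.emeasure_eq_measure) (auto simp: measure_pmf_zero_iff set_pmf_eq)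
    finally show ?thesis
      unfolding N_def by (auto intro: sets_PiM_I simp: null_sets_def)
  qed
  then have "(\<Union>i. N i) \<in> null_sets (PiM UNIV (\<lambda>_. measure_pmf D))" by (rule null_sets_UN)
  moreover have "{\<omega> \<in> space (PiM UNIV (\<lambda>_. measure_pmf D)). \<not> (\<forall>i. \<omega> i \<in> A)} \<subseteq> (\<Union>i. N i)"
    by (auto simp: N_def prod_emb_def space_PiM restrict_def PiE_iff extensional_def)
  ultimately show ?thesis by (rule AE_I')
qed

lemma emeasure_ev:
  fixes A :: "nat set"
  assumes fin: "finite A" and Az: "\<And>k. k \<notin> A \<Longrightarrow> pmf D k = 0"
  shows "emeasure (PiM UNIV (\<lambda>_. measure_pmf D)) {\<omega>. Q (\<omega> ` {..<t})}
       = ennreal (\<Sum>xs\<in>{xs\<in>LL A t. Q (set xs)}. prod_list (map (pmf D) xs))"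
proof -
  let ?M = "PiM UNIV (\<lambda>_. measure_pmf D)"
  let ?S = "{xs\<in>LL A t. Q (set xs)}"
  have finS: "finite ?S" using LL_finite[OF fin] by simp
  have ae: "AE \<omega> in ?M. \<forall>i::nat. \<omega> i \<in> A" by (rule AE_range) (rule Az)
  have "emeasure ?M {\<omega>. Q (\<omega> ` {..<t})} = emeasure ?M (\<Union>xs\<in>?S. cyl xs)"
  proof (rule emeasure_eq_AE)
    show "AE \<omega> in ?M. (\<omega> \<in> {\<omega>. Q (\<omega> ` {..<t})}) = (\<omega> \<in> (\<Union>xs\<in>?S. cyl xs))"
      using ae
    proof eventually_elim
      case (elim \<omega>)
      show ?case
      proof
        assume "\<omega> \<in> {\<omega>. Q (\<omega> ` {..<t})}"
        then have q: "Q (\<omega> ` {..<t})" by simp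
        have l: "map \<omega> [0..<t] \<in> LL A t" using elim by (auto simp: LL_def)
        have c: "\<omega> \<in> cyl (map \<omega> [0..<t])" by (simp add: cyl_def)
        have "set (map \<omega> [0..<t]) = \<omega> ` {..<t}" by (simp add: atLeast0LessThan)
        with q l have "map \<omega> [0..<t] \<in> ?S" by simp
        with c show "\<omega> \<in> (\<Union>xs\<in>?S. cyl xs)" by blast
      next
        assume "\<omega> \<in> (\<Union>xs\<in>?S. cyl xs)"
        then obtain xs where xs: "xs \<in> ?S" "\<omega> \<in> cyl xs" by blast
        then have "length xs = t" by (simp add: LL_def)
        with xs cyl_image[OF xs(2)] show "\<omega> \<in> {\<omega>. Q (\<omega> ` {..<t})}" by simp
      qed
    qed
    show "{\<omega>. Q (\<omega> ` {..<t})} \<in> sets ?M" by (rule ev_sets)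
    show "(\<Union>xs\<in>?S. cyl xs) \<in> sets ?M" using finS by (intro sets.finite_UN) (auto simp: cyl_sets)
  qed
  also have "\<dots> = (\<Sum>xs\<in>?S. emeasure ?M (cyl xs))"
  proof (rule sum_emeasure[symmetric])
    show "cyl ` ?S \<subseteq> sets ?M" using cyl_sets by blast
    show "finite ?S" by (rule finS)
    show "disjoint_family_on cyl ?S" unfolding disjoint_family_on_def
    proof (intro ballI impI)
      fix xs ys assume "xs \<in> ?S" "ys \<in> ?S" "xs \<noteq> ys"
      then show "cyl xs \<inter> cyl ys = {}" by (intro cyl_disj) (auto simp: LL_def)
    qed
  qed
  also have "\<dots> = (\<Sum>xs\<in>?S. ennreal (prod_list (map (pmf D) xs)))" by (simp add: emeasure_cyl)
  also have "\<dots> = ennreal (\<Sum>xs\<in>?S. prod_list (map (pmf D) xs))"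
    by (rule sum_ennreal) (auto intro!: prod_list_nonneg)
  finally show ?thesis .
qed




lemma suminf_one_top: "(\<Sum>i. (1::ennreal)) = \<top>"
proof -
  have "(\<Sum>i. (1::ennreal)) = (SUP n. of_nat n)" by (simp add: suminf_eq_SUP)
  then show ?thesis using ennreal_SUP_of_nat_eq_top by simp
qed

lemma T_sum: "T_cn c n \<omega> = (\<Sum>t. indicator {\<omega>. \<not> c \<le> card (\<omega> ` {..<t} \<inter> {1..n})} \<omega>)"
proof -
  let ?C = "\<lambda>t. c \<le> card (\<omega> ` {..<t} \<inter> {1..n})"
  have mono: "?C t'" if "?C t" "t \<le> t'" for t t'
  proof -
    have "\<omega> ` {..<t} \<inter> {1..n} \<subseteq> \<omega> ` {..<t'} \<inter> {1..n}" using that by auto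
    then have "card (\<omega> ` {..<t} \<inter> {1..n}) \<le> card (\<omega> ` {..<t'} \<inter> {1..n})" by (intro card_mono) auto
    then show ?thesis using that by simp
  qed
  have ind: "(\<Sum>t. indicator {\<omega>. \<not> c \<le> card (\<omega> ` {..<t} \<inter> {1..n})} \<omega>) = (\<Sum>t. if ?C t then 0 else (1::ennreal))"
    by (rule arg_cong[where f=suminf]) (auto split: split_indicator simp: fun_eq_iff)
  show ?thesis
  proof (cases "\<exists>t. ?C t")
    case True
    define L where "L = (LEAST t. ?C t)"
    have CL: "?C L" unfolding L_def using True by (metis LeastI)
    have iff: "\<not> ?C t \<longleftrightarrow> t < L" for t
    proof
      assume "\<not> ?C t"
      then show "t < L" using mono[OF CL, of t] by (meson not_less)
    next
      assume "t < L"
      then show "\<not> ?C t" unfolding L_def by (rule not_less_Least)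
    qed
    have "(\<Sum>t. if ?C t then 0 else (1::ennreal)) = (\<Sum>t\<in>{..<L}. if ?C t then 0 else (1::ennreal))"
      by (rule suminf_finite) (use iff in auto)
    also have "\<dots> = (\<Sum>t\<in>{..<L}. (1::ennreal))"
      by (rule sum.cong) (use iff in auto)
    also have "\<dots> = of_nat L" by simp
    finally show ?thesis using True ind by (simp add: T_cn_def L_def)
  next
    case False
    then show ?thesis using ind by (simp add: T_cn_def suminf_one_top)
  qed
qed

definition Pb :: "nat \<Rightarrow> nat \<Rightarrow> nat set \<Rightarrow> real" where
  "Pb n c S = (if card (S \<inter> {1..n}) < c then 1 else 0)"

lemma ET_eq:
  assumes q: "\<forall>i\<in>{1..n}. 0 \<le> q i" "(\<Sum>i=1..n. q i) \<le> 1"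
  shows "ET c n q = (\<Sum>t. ennreal (FF (wq n q) {0..n} t (Pb n c)))"
proof -
  let ?D = "coupon_dist n q"
  let ?M = "PiM (UNIV::nat set) (\<lambda>_. measure_pmf ?D)"
  let ?Q = "\<lambda>S. \<not> c \<le> card (S \<inter> {1..n})"
  have M: "draws n q = ?M" unfolding draws_def ..
  have pm: "pmf ?D = wq n q" using pmf_coupon[OF q] by (intro ext)
  have meas: "{\<omega>. \<not> c \<le> card (\<omega> ` {..<t} \<inter> {1..n})} \<in> sets ?M" for t
    using ev_sets[where t=t and Q="?Q"] by simp
  have "ET c n q = (\<integral>\<^sup>+ \<omega>. (\<Sum>t. indicator {\<omega>. \<not> c \<le> card (\<omega> ` {..<t} \<inter> {1..n})} \<omega>) \<partial>?M)"
    unfolding ET_def M T_sum ..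
  also have "\<dots> = (\<Sum>t. \<integral>\<^sup>+ \<omega>. indicator {\<omega>. \<not> c \<le> card (\<omega> ` {..<t} \<inter> {1..n})} \<omega> \<partial>?M)"
    by (rule nn_integral_suminf) (rule borel_measurable_indicator, rule meas)
  also have "\<dots> = (\<Sum>t. emeasure ?M {\<omega>. ?Q (\<omega> ` {..<t})})"
    by (rule arg_cong[where f=suminf], rule ext, rule nn_integral_indicator[OF meas])
  also have "\<dots> = (\<Sum>t. ennreal (FF (wq n q) {0..n} t (Pb n c)))"
  proof (rule arg_cong[where f=suminf], rule ext)
    fix t
    have "emeasure ?M {\<omega>. ?Q (\<omega> ` {..<t})} = ennreal (\<Sum>xs\<in>{xs\<in>LL {0..n} t. ?Q (set xs)}. prod_list (map (pmf ?D) xs))"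
      by (rule emeasure_ev[of "{0..n}" ?D ?Q]) (auto simp: pm wq_def)
    also have "(\<Sum>xs\<in>{xs\<in>LL {0..n} t. ?Q (set xs)}. prod_list (map (pmf ?D) xs)) = FF (wq n q) {0..n} t (Pb n c)"
      unfolding FF_def pm Pb_def
      apply (subst sum.inter_filter[OF LL_finite])
       apply simp
      apply (rule sum.cong)
       apply (rule refl)
      by (simp add: not_le)
    finally show "emeasure ?M {\<omega>. ?Q (\<omega> ` {..<t})} = ennreal (FF (wq n q) {0..n} t (Pb n c))" .
  qed
  finally show ?thesis .
qed



lemma pow_pair:
  fixes x x' y y' :: real
  assumes "0 \<le> x" "x \<le> x'" "x' \<le> y'" "x' + y' = x + y"
  shows "x'^m + y'^m \<le> x^m + y^m"
proof -
  have e1: "x'^m - x^m = (x' - x) * (\<Sum>i<m. x^(m - Suc i) * x'^i)" by (rule power_diff_sumr2)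
  have e2: "y^m - y'^m = (y - y') * (\<Sum>i<m. y'^(m - Suc i) * y^i)" by (rule power_diff_sumr2)
  have le: "(\<Sum>i<m. x^(m - Suc i) * x'^i) \<le> (\<Sum>i<m. y'^(m - Suc i) * y^i)"
  proof (rule sum_mono)
    fix i assume "i \<in> {..<m}"
    show "x^(m - Suc i) * x'^i \<le> y'^(m - Suc i) * y^i"
      using assms by (intro mult_mono power_mono) auto
  qed
  have d: "x' - x = y - y'" "0 \<le> x' - x" using assms by auto
  have "(x' - x) * (\<Sum>i<m. x^(m - Suc i) * x'^i) \<le> (y - y') * (\<Sum>i<m. y'^(m - Suc i) * y^i)"
    unfolding d(1) by (rule mult_left_mono[OF le]) (use d in simp)
  then show ?thesis using e1 e2 by linarith
qed

lemma Pb_anti: "card (T' \<inter> {1..n}) \<le> card (T \<inter> {1..n}) \<Longrightarrow> Pb n c T \<le> Pb n c T'"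
  by (simp add: Pb_def)

lemma Pb_01: "0 \<le> Pb n c T" "Pb n c T \<le> 1" by (auto simp: Pb_def)

lemma lin_aux:
  fixes p p' X Z s :: real
  assumes "p' * (X - Z) \<le> p * (X - Z)"
  shows "p' * X + (s - p') * Z \<le> p * X + (s - p) * Z"
  using assms by (simp add: algebra_simps)

lemma HH_pair:
  assumes ij: "i \<in> {1..n}" "j \<in> {1..n}" "i \<noteq> j" "j \<notin> S"
    and s: "x' + y' = x + y" and pw: "x'^m + y'^m \<le> x^m + y^m"
  shows "HH i j x' y' (Pb n c) S m \<le> HH i j x y (Pb n c) S m"
proof (cases "i \<in> S")
  case False
  then show ?thesis by (simp add: HH_def)
next
  case True
  let ?X = "Pb n c S" and ?Z = "Pb n c (insert j S)"
  have c1: "insert j (S - {i}) \<inter> {1..n} = insert j ((S \<inter> {1..n}) - {i})" using ij by auto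
  have "card (insert j (S - {i}) \<inter> {1..n}) = card (S \<inter> {1..n})"
  proof -
    have "card (insert j ((S \<inter> {1..n}) - {i})) = Suc (card ((S \<inter> {1..n}) - {i}))"
      using ij by (intro card_insert_disjoint) auto
    also have "card ((S \<inter> {1..n}) - {i}) = card (S \<inter> {1..n}) - 1"
      using ij True by (intro card_Diff_singleton) auto
    also have "Suc (card (S \<inter> {1..n}) - 1) = card (S \<inter> {1..n})"
    proof -
      have "card (S \<inter> {1..n}) > 0" using ij True by (subst card_gt_0_iff) auto
      then show ?thesis by simp
    qed
    finally show ?thesis using c1 by simp
  qed
  then have Y: "Pb n c (insert j (S - {i})) = ?X" by (simp add: Pb_def)
  have ZX: "?Z \<le> ?X" by (rule Pb_anti) (intro card_mono, auto)
  have h: "HH i j a b (Pb n c) S m = (a^m + b^m) * ?X + ((a+b)^m - (a^m + b^m)) * ?Z" for a b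
    using True by (simp add: HH_def Y algebra_simps)
  have key: "(x'^m + y'^m) * (?X - ?Z) \<le> (x^m + y^m) * (?X - ?Z)"
    by (rule mult_right_mono[OF pw]) (use ZX in simp)
  show ?thesis unfolding h s by (rule lin_aux[OF key])
qed

lemma HH_null:
  assumes i: "i \<in> {1..n}" and s: "x' + y' = x + y" and y: "0 \<le> y'" "y' \<le> y"
  shows "HH i 0 x' y' (Pb n c) S m \<le> HH i 0 x y (Pb n c) S m"
proof (cases "i \<in> S")
  case False
  then show ?thesis by (simp add: HH_def)
next
  case True
  let ?X = "Pb n c S" and ?Y = "Pb n c (insert 0 (S - {i}))"
  have Z: "Pb n c (insert 0 S) = ?X"
  proof -
    have "insert 0 S \<inter> {1..n} = S \<inter> {1..n}" by auto
    then show ?thesis by (simp add: Pb_def)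
  qed
  have YX: "?X \<le> ?Y" by (rule Pb_anti) (intro card_mono, auto)
  have h: "HH i 0 a b (Pb n c) S m = (a+b)^m * ?X + b^m * (?Y - ?X)" for a b
    using True by (simp add: HH_def Z algebra_simps)
  have "y'^m \<le> y^m" using y by (intro power_mono) auto
  then have "y'^m * (?Y - ?X) \<le> y^m * (?Y - ?X)" by (rule mult_right_mono) (use YX in simp)
  then show ?thesis unfolding h s by simp
qed

lemma FF_mono_pair:
  assumes A: "finite A" "i \<in> A" "j \<in> A" "i \<noteq> j"
    and same: "\<And>k. k \<in> A \<Longrightarrow> k \<noteq> i \<Longrightarrow> k \<noteq> j \<Longrightarrow> w' k = w k"
    and nn: "\<And>k. k \<in> A \<Longrightarrow> 0 \<le> w k"
    and H: "\<And>S m. j \<notin> S \<Longrightarrow> HH i j (w' i) (w' j) P S m \<le> HH i j (w i) (w j) P S m"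
  shows "FF w' A t P \<le> FF w A t P"
proof -
  have WW: "WW i w' ys = WW i w ys" if "ys \<in> LL (A - {j}) t" for ys
    unfolding WW_def using that
    by (intro arg_cong[where f=prod_list] map_cong refl) (auto simp: LL_def intro: same)
  have WWnn: "0 \<le> WW i w ys" if "ys \<in> LL (A - {j}) t" for ys
    unfolding WW_def using that by (intro prod_list_nonneg) (auto simp: LL_def intro: nn)
  show ?thesis unfolding FF_GG[OF A] GG_def
  proof (rule sum_mono)
    fix ys assume ys: "ys \<in> LL (A - {j}) t"
    have "j \<notin> set ys" using ys by (auto simp: LL_def)
    then show "WW i w' ys * HH i j (w' i) (w' j) P (set ys) (count_list ys i)
        \<le> WW i w ys * HH i j (w i) (w j) P (set ys) (count_list ys i)"
      unfolding WW[OF ys] by (intro mult_left_mono H WWnn[OF ys])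
  qed
qed



lemma exists_below:
  fixes w :: "nat \<Rightarrow> real"
  assumes sum: "(\<Sum>k=1..n. w k) = real n * \<mu>" and ne: "\<not> (\<forall>k\<in>{1..n}. w k = \<mu>)"
  shows "\<exists>i\<in>{1..n}. w i < \<mu>"
proof (rule ccontr)
  assume "\<not> ?thesis"
  then have ge: "\<forall>k\<in>{1..n}. 0 \<le> w k - \<mu>" by auto
  have "(\<Sum>k=1..n. w k - \<mu>) = 0" using sum by (simp add: sum_subtractf)
  then have "\<forall>k\<in>{1..n}. w k - \<mu> = 0" using sum_nonneg_eq_0_iff[of "{1..n}" "\<lambda>k. w k - \<mu>"] ge by simp
  then show False using ne by auto
qed

lemma exists_above:
  fixes w :: "nat \<Rightarrow> real"
  assumes sum: "(\<Sum>k=1..n. w k) = real n * \<mu>" and ne: "\<not> (\<forall>k\<in>{1..n}. w k = \<mu>)"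
  shows "\<exists>i\<in>{1..n}. w i > \<mu>"
proof (rule ccontr)
  assume "\<not> ?thesis"
  then have ge: "\<forall>k\<in>{1..n}. 0 \<le> \<mu> - w k" by auto
  have "(\<Sum>k=1..n. \<mu> - w k) = 0" using sum by (simp add: sum_subtractf)
  then have "\<forall>k\<in>{1..n}. \<mu> - w k = 0" using sum_nonneg_eq_0_iff[of "{1..n}" "\<lambda>k. \<mu> - w k"] ge by simp
  then show False using ne by auto
qed

lemma avg_chain:
  fixes n :: nat and \<mu> :: real and P :: "nat set \<Rightarrow> real"
  assumes HP: "\<And>i j x y x' y' S m. i \<in> {1..n} \<Longrightarrow> j \<in> {1..n} \<Longrightarrow> i \<noteq> j \<Longrightarrow> j \<notin> S \<Longrightarrow>
      x' + y' = x + y \<Longrightarrow> x'^m + y'^m \<le> x^m + y^m \<Longrightarrow> HH i j x' y' P S m \<le> HH i j x y P S m"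
  shows "\<forall>w. (\<forall>k\<in>{1..n}. 0 \<le> w k) \<longrightarrow> 0 \<le> w 0 \<longrightarrow> (\<Sum>k=1..n. w k) = real n * \<mu>
     \<longrightarrow> card {k\<in>{1..n}. w k \<noteq> \<mu>} = N
     \<longrightarrow> FF (\<lambda>k. if k = 0 then w 0 else \<mu>) {0..n} t P \<le> FF w {0..n} t P"
proof (induction N rule: less_induct)
  case (less N)
  show ?case
  proof (intro allI impI)
    fix w :: "nat \<Rightarrow> real"
    assume nn: "\<forall>k\<in>{1..n}. 0 \<le> w k" and nn0: "0 \<le> w 0"
      and sum: "(\<Sum>k=1..n. w k) = real n * \<mu>" and cN: "card {k\<in>{1..n}. w k \<noteq> \<mu>} = N"
    show "FF (\<lambda>k. if k = 0 then w 0 else \<mu>) {0..n} t P \<le> FF w {0..n} t P"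
    proof (cases "\<forall>k\<in>{1..n}. w k = \<mu>")
      case True
      have "FF (\<lambda>k. if k = 0 then w 0 else \<mu>) {0..n} t P = FF w {0..n} t P"
        by (rule FF_cong) (use True in auto)
      then show ?thesis by simp
    next
      case False
      obtain i where i: "i \<in> {1..n}" "w i < \<mu>" using exists_below[OF sum False] by blast
      obtain j where j: "j \<in> {1..n}" "w j > \<mu>" using exists_above[OF sum False] by blast
      have ij: "i \<noteq> j" using i j by auto
      define \<delta> where "\<delta> = min (\<mu> - w i) (w j - \<mu>)"
      have \<delta>: "0 < \<delta>" "w i + \<delta> \<le> \<mu>" "\<mu> \<le> w j - \<delta>" using i j by (auto simp: \<delta>_def)
      define w2 where "w2 = (\<lambda>k. w k + (if k = i then \<delta> else 0) - (if k = j then \<delta> else 0))"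
      have w2i: "w2 i = w i + \<delta>" and w2j: "w2 j = w j - \<delta>" using ij by (auto simp: w2_def)
      have w2o: "w2 k = w k" if "k \<noteq> i" "k \<noteq> j" for k using that by (simp add: w2_def)
      have w20: "w2 0 = w 0" using i j by (intro w2o) auto
      have nn2: "\<forall>k\<in>{1..n}. 0 \<le> w2 k"
      proof
        fix k assume k: "k \<in> {1..n}"
        show "0 \<le> w2 k"
        proof (cases "k = i")
          case True
          have "0 \<le> w k" using nn k by auto
          then show ?thesis using True w2i \<delta>(1) by simp
        next
          case False
          show ?thesis
          proof (cases "k = j")
            case True
            have "0 \<le> w i" using nn i by auto
            moreover have "w2 k = w j - \<delta>" using True w2j by simp
            ultimately show ?thesis using \<delta> i(2) by linarith
          next
            case False then show ?thesis using w2o[of k] \<open>k \<noteq> i\<close> nn k by auto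
          qed
        qed
      qed
      have sum2: "(\<Sum>k=1..n. w2 k) = real n * \<mu>"
      proof -
        have "(\<Sum>k=1..n. w2 k) = (\<Sum>k=1..n. w k) + (\<Sum>k=1..n. (if k = i then \<delta> else 0)) - (\<Sum>k=1..n. (if k = j then \<delta> else 0))"
          unfolding w2_def by (simp only: sum.distrib sum_subtractf)
        also have "(\<Sum>k=1..n. (if k = i then \<delta> else 0)) = \<delta>" using i by (simp add: sum.delta)
        also have "(\<Sum>k=1..n. (if k = j then \<delta> else 0)) = \<delta>" using j by (simp add: sum.delta)
        finally show ?thesis using sum by simp
      qed
      have sub: "{k\<in>{1..n}. w2 k \<noteq> \<mu>} \<subset> {k\<in>{1..n}. w k \<noteq> \<mu>}"
      proof
        show "{k\<in>{1..n}. w2 k \<noteq> \<mu>} \<subseteq> {k\<in>{1..n}. w k \<noteq> \<mu>}"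
        proof (intro subsetI)
          fix k assume k: "k \<in> {k\<in>{1..n}. w2 k \<noteq> \<mu>}"
          show "k \<in> {k\<in>{1..n}. w k \<noteq> \<mu>}"
          proof (cases "k = i \<or> k = j")
            case True then show ?thesis using i j k by auto
          next
            case False then show ?thesis using w2o[of k] k by auto
          qed
        qed
        show "{k\<in>{1..n}. w2 k \<noteq> \<mu>} \<noteq> {k\<in>{1..n}. w k \<noteq> \<mu>}"
        proof (cases "\<delta> = \<mu> - w i")
          case True
          then have "w2 i = \<mu>" using w2i by simp
          then have "i \<notin> {k\<in>{1..n}. w2 k \<noteq> \<mu>}" by simp
          moreover have "i \<in> {k\<in>{1..n}. w k \<noteq> \<mu>}" using i by simp
          ultimately show ?thesis by blast
        next
          case False
          then have "\<delta> = w j - \<mu>" by (auto simp: \<delta>_def min_def split: if_splits)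
          then have "w2 j = \<mu>" using w2j by simp
          then have "j \<notin> {k\<in>{1..n}. w2 k \<noteq> \<mu>}" by simp
          moreover have "j \<in> {k\<in>{1..n}. w k \<noteq> \<mu>}" using j by simp
          ultimately show ?thesis by blast
        qed
      qed
      have lt: "card {k\<in>{1..n}. w2 k \<noteq> \<mu>} < N"
        unfolding cN[symmetric] by (rule psubset_card_mono[OF _ sub]) simp
      have IH: "FF (\<lambda>k. if k = 0 then w2 0 else \<mu>) {0..n} t P \<le> FF w2 {0..n} t P"
        using less.IH[OF lt, rule_format, of w2] nn2 nn0 w20 sum2 by simp
      have step: "FF w2 {0..n} t P \<le> FF w {0..n} t P"
      proof (rule FF_mono_pair[where i=i and j=j])
        show "finite {0..n}" "i \<in> {0..n}" "j \<in> {0..n}" "i \<noteq> j" using i j ij by auto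
        show "\<And>k. k \<in> {0..n} \<Longrightarrow> k \<noteq> i \<Longrightarrow> k \<noteq> j \<Longrightarrow> w2 k = w k" using w2o by blast
        show "0 \<le> w k" if "k \<in> {0..n}" for k using nn nn0 that by (cases "k = 0") auto
        fix S m assume "j \<notin> S"
        show "HH i j (w2 i) (w2 j) P S m \<le> HH i j (w i) (w j) P S m"
        proof (rule HP[OF i(1) j(1) ij \<open>j \<notin> S\<close>])
          show "w2 i + w2 j = w i + w j" using w2i w2j by simp
          show "w2 i ^ m + w2 j ^ m \<le> w i ^ m + w j ^ m"
            unfolding w2i w2j by (rule pow_pair) (use nn i \<delta> in auto)
        qed
      qed
      show ?thesis using order_trans[OF IH step] unfolding w20 .
    qed
  qed
qed

definition wk :: "nat \<Rightarrow> real \<Rightarrow> nat \<Rightarrow> nat \<Rightarrow> real" where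
  "wk n s k i = (if i = 0 then (1 - s) * (1 - real k / real n) else if i \<le> k then 1 / real n else s / real n)"

lemma null_chain:
  fixes P :: "nat set \<Rightarrow> real"
  assumes n: "n \<ge> 1" and s: "0 \<le> s" "s \<le> 1"
    and HN: "\<And>i x y x' y' S m. i \<in> {1..n} \<Longrightarrow> x' + y' = x + y \<Longrightarrow> 0 \<le> y' \<Longrightarrow> y' \<le> y
       \<Longrightarrow> HH i 0 x' y' P S m \<le> HH i 0 x y P S m"
  shows "k \<le> n \<Longrightarrow> FF (wk n s k) {0..n} t P \<le> FF (wk n s 0) {0..n} t P"
proof (induction k)
  case 0
  then show ?case by simp
next
  case (Suc k)
  have kn: "k < n" using Suc.prems by simp
  have npos: "real n > 0" using n by simp
  have "FF (wk n s (Suc k)) {0..n} t P \<le> FF (wk n s k) {0..n} t P"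
  proof (rule FF_mono_pair[where i="Suc k" and j=0])
    show "finite {0..n}" "Suc k \<in> {0..n}" "0 \<in> {0..n}" "Suc k \<noteq> 0" using Suc.prems by auto
    show "\<And>i. i \<in> {0..n} \<Longrightarrow> i \<noteq> Suc k \<Longrightarrow> i \<noteq> 0 \<Longrightarrow> wk n s (Suc k) i = wk n s k i"
      by (auto simp: wk_def)
    show "\<And>i. i \<in> {0..n} \<Longrightarrow> 0 \<le> wk n s k i"
    proof -
      fix i
      have "real k / real n \<le> 1" using kn npos by (simp add: field_simps)
      then show "0 \<le> wk n s k i" using s npos by (auto simp: wk_def)
    qed
    fix S m
    show "HH (Suc k) 0 (wk n s (Suc k) (Suc k)) (wk n s (Suc k) 0) P S m
        \<le> HH (Suc k) 0 (wk n s k (Suc k)) (wk n s k 0) P S m"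
    proof (rule HN)
      show "Suc k \<in> {1..n}" using Suc.prems by auto
      show "wk n s (Suc k) (Suc k) + wk n s (Suc k) 0 = wk n s k (Suc k) + wk n s k 0"
        using npos by (simp add: wk_def field_simps)
      have "real (Suc k) / real n \<le> 1" using Suc.prems npos by (simp add: field_simps)
      then show "0 \<le> wk n s (Suc k) 0" using s by (simp add: wk_def)
      show "wk n s (Suc k) 0 \<le> wk n s k 0"
        using s npos by (simp add: wk_def divide_right_mono mult_left_mono)
    qed
  qed
  then show ?case using Suc by simp
qed



lemma ennreal_suminf_mono: "(\<And>t. f t \<le> g t) \<Longrightarrow> (\<Sum>t. ennreal (f t)) \<le> (\<Sum>t. ennreal (g t))"
  by (intro suminf_le summableI ennreal_leI)

theorem theorem2:
  fixes n c :: nat and p :: "nat \<Rightarrow> real"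
  assumes "n \<ge> 1"
    and "c \<in> {1..n}"
    and "\<forall>i\<in>{1..n}. 0 < p i \<and> p i < 1"
    and "(\<Sum>i=1..n. p i) \<le> 1"
  shows "ET c n p \<ge> ET c n (\<lambda>i. (1 - (1 - (\<Sum>j=1..n. p j))) / real n)
       \<and> ET c n (\<lambda>i. (1 - (1 - (\<Sum>j=1..n. p j))) / real n) \<ge> ET c n (\<lambda>i. 1 / real n)"
proof -
  let ?s = "\<Sum>j=1..n. p j"
  let ?v = "\<lambda>i::nat. (1 - (1 - (\<Sum>j=1..n. p j))) / real n"
  let ?u = "\<lambda>i::nat. 1 / real n"
  have npos: "real n > 0" using assms(1) by simp
  have pnn: "\<forall>i\<in>{1..n}. 0 \<le> p i" using assms(3) by auto
  have s0: "0 \<le> ?s" using pnn by (intro sum_nonneg) auto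
  have s1: "?s \<le> 1" by (rule assms(4))
  have vsum: "(\<Sum>i=1..n. ?v i) = ?s" using npos by simp
  have usum: "(\<Sum>i=1..n. ?u i) = 1" using npos by simp
  have vnn: "\<forall>i\<in>{1..n}. 0 \<le> ?v i" using s0 npos by simp
  have unn: "\<forall>i\<in>{1..n}. 0 \<le> ?u i" using npos by simp
  have ETp: "ET c n p = (\<Sum>t. ennreal (FF (wq n p) {0..n} t (Pb n c)))" by (rule ET_eq[OF pnn s1])
  have ETv: "ET c n ?v = (\<Sum>t. ennreal (FF (wq n ?v) {0..n} t (Pb n c)))" by (rule ET_eq[OF vnn]) (use vsum s1 in simp)
  have ETu: "ET c n ?u = (\<Sum>t. ennreal (FF (wq n ?u) {0..n} t (Pb n c)))" by (rule ET_eq[OF unn]) (use usum in simp)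
  have first: "FF (wq n ?v) {0..n} t (Pb n c) \<le> FF (wq n p) {0..n} t (Pb n c)" for t
  proof -
    have HP: "\<And>i j x y x' y' S m. i \<in> {1..n} \<Longrightarrow> j \<in> {1..n} \<Longrightarrow> i \<noteq> j \<Longrightarrow> j \<notin> S \<Longrightarrow>
      x' + y' = x + y \<Longrightarrow> x'^m + y'^m \<le> x^m + y^m \<Longrightarrow> HH i j x' y' (Pb n c) S m \<le> HH i j x y (Pb n c) S m"
      by (rule HH_pair)
    have ch: "FF (\<lambda>k. if k = 0 then wq n p 0 else ?s / real n) {0..n} t (Pb n c) \<le> FF (wq n p) {0..n} t (Pb n c)"
    proof (rule avg_chain[where \<mu>="?s / real n", OF HP, rule_format, where w="wq n p"])
      show "\<And>k. k \<in> {1..n} \<Longrightarrow> 0 \<le> wq n p k" using pnn by (auto simp: wq_def)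
      show "0 \<le> wq n p 0" using s1 by (simp add: wq_def)
      have "(\<Sum>k=1..n. wq n p k) = ?s" by (rule sum.cong) (auto simp: wq_def)
      then show "(\<Sum>k=1..n. wq n p k) = real n * (?s / real n)" using npos by simp
    qed (assumption | rule refl)+
    have "FF (wq n ?v) {0..n} t (Pb n c) = FF (\<lambda>k. if k = 0 then wq n p 0 else ?s / real n) {0..n} t (Pb n c)"
      by (rule FF_cong) (use vsum in \<open>auto simp: wq_def\<close>)
    then show ?thesis using ch by simp
  qed
  have second: "FF (wq n ?u) {0..n} t (Pb n c) \<le> FF (wq n ?v) {0..n} t (Pb n c)" for t
  proof -
    have HN: "\<And>i x y x' y' S m. i \<in> {1..n} \<Longrightarrow> x' + y' = x + y \<Longrightarrow> 0 \<le> y' \<Longrightarrow> y' \<le> y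
       \<Longrightarrow> HH i 0 x' y' (Pb n c) S m \<le> HH i 0 x y (Pb n c) S m"
      by (rule HH_null)
    have ch: "FF (wk n ?s n) {0..n} t (Pb n c) \<le> FF (wk n ?s 0) {0..n} t (Pb n c)"
      by (rule null_chain[OF assms(1) s0 s1 HN]) simp_all
    have e1: "FF (wq n ?u) {0..n} t (Pb n c) = FF (wk n ?s n) {0..n} t (Pb n c)"
      by (rule FF_cong) (use usum npos in \<open>auto simp: wq_def wk_def\<close>)
    have e2: "FF (wq n ?v) {0..n} t (Pb n c) = FF (wk n ?s 0) {0..n} t (Pb n c)"
      by (rule FF_cong) (use vsum in \<open>auto simp: wq_def wk_def\<close>)
    show ?thesis using ch e1 e2 by simp
  qed
  show ?thesis
    unfolding ETp ETv ETu
    using ennreal_suminf_mono[OF first] ennreal_suminf_mono[OF second] by simp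
qed

end
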